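(* Let $(Z_{1i},Z_{2i})$, $i=1,2,\dots$, be i.i.d. pairs where $Z_{1i}$ and $Z_{2i}$ are independent $N(0,1)$ random variables. Then almost surely, for all sufficiently large $n$, $$\sup_{\beta_0,\beta_1\in\mathbb R}\sum_{i=1}^n\mathbb 1\big(|Z_{2i}-\beta_0-\beta_1Z_{1i}|\le 1/4\big)\le n/4,$$ where $\mathbb 1(\cdot)$ is the indicator function. *)

theory Defs
  imports "HOL-Probability.Probability"
begin

end

theory Submission
  imports Defs
begin


lemma (in prob_space) eventually_sum_le:
  fixes X :: "nat \<Rightarrow> 'a \<Rightarrow> real"
  assumes indep: "indep_vars (\<lambda>_. borel) X UNIV"
    and bnd: "\<And>i x. x \<in> space M \<Longrightarrow> X i x \<in> {0..1}"
    and ex: "\<And>i. expectation (X i) \<le> p" and pq: "p < q"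
  shows "AE x in M. eventually (\<lambda>n. (\<Sum>i<n. X i x) \<le> real n * q) sequentially"
proof -
  define e where "e = q - p"
  have e: "e > 0" using pq by (simp add: e_def)
  have rv[measurable]: "\<And>i. X i \<in> borel_measurable M" using indep unfolding indep_vars_def by auto
  define A where "A n = {x\<in>space M. (\<Sum>i<n. X i x) > real n * q}" for n
  have Am[measurable]: "A n \<in> sets M" for n unfolding A_def by measurable
  have bound: "measure M (A n) \<le> exp (-2 * e\<^sup>2) ^ n" for n
  proof (cases "n = 0")
    case True
    then show ?thesis by (simp add: A_def)
  next
    case False
    interpret H: Hoeffding_ineq M "{..<n}" X "\<lambda>_. 0" "\<lambda>_. 1" "\<Sum>i<n. expectation (X i)"
    proof unfold_locales
      show "indep_vars (\<lambda>_. borel) X {..<n}" using indep by (rule indep_vars_subset) auto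
      show "AE x in M. X i x \<in> {0..1}" for i using bnd by auto
    qed auto
    have mu: "(\<Sum>i<n. expectation (X i)) \<le> real n * p"
      using sum_mono[of "{..<n}" "\<lambda>i. expectation (X i)" "\<lambda>_. p"] ex by auto
    have "A n \<subseteq> {x\<in>space M. (\<Sum>i<n. X i x) \<ge> (\<Sum>i<n. expectation (X i)) + real n * e}"
      using mu by (auto simp: A_def e_def algebra_simps)
    hence "measure M (A n) \<le> prob {x\<in>space M. (\<Sum>i<n. X i x) \<ge> (\<Sum>i<n. expectation (X i)) + real n * e}"
      by (intro finite_measure_mono) measurable
    also have "\<dots> \<le> exp (-2 * (real n * e)\<^sup>2 / (\<Sum>i<n. (1 - 0)\<^sup>2))"
      using e False by (intro H.Hoeffding_ineq_ge) auto
    also have "-2 * (real n * e)\<^sup>2 / (\<Sum>i<n. (1 - 0)\<^sup>2) = real n * (-2 * e\<^sup>2)"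
      using False by (simp add: power2_eq_square field_simps)
    also have "exp (real n * (-2 * e\<^sup>2)) = exp (-2 * e\<^sup>2) ^ n"
      by (rule exp_of_nat_mult)
    finally show ?thesis .
  qed
  have "summable (\<lambda>n. exp (-2 * e\<^sup>2) ^ n)"
    using e by (intro summable_geometric) simp
  hence sm: "summable (\<lambda>n. measure M (A n))"
    by (rule summable_comparison_test'[where N=0]) (use bound in auto)
  have "AE x in M. eventually (\<lambda>n. x \<in> space M - A n) sequentially"
    by (rule borel_cantelli_AE1) (use sm in \<open>auto simp: emeasure_eq_measure\<close>)
  thus ?thesis
    by (rule AE_mp) (auto intro!: AE_I2 elim!: eventually_mono simp: A_def)
qed



lemma (in prob_space) indep_pairs:
  fixes Z1 Z2 :: "nat \<Rightarrow> 'a \<Rightarrow> real" and f :: "real \<times> real \<Rightarrow> real"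
  assumes ind: "indep_vars (\<lambda>_. borel) (\<lambda>(b, i). if b then Z2 i else Z1 i) (UNIV :: (bool \<times> nat) set)"
    and f[measurable]: "f \<in> borel_measurable borel"
  shows "indep_vars (\<lambda>_. borel) (\<lambda>i \<omega>. f (Z1 i \<omega>, Z2 i \<omega>)) UNIV"
proof -
  define X where "X = (\<lambda>(b, i). if b then Z2 i else Z1 i)"
  define K where "K j = {(False, j), (True, j)}" for j :: nat
  have "indep_vars (\<lambda>j. PiM (K j) (\<lambda>_. borel)) (\<lambda>j \<omega>. restrict (\<lambda>i. X i \<omega>) (K j)) UNIV"
    by (rule indep_vars_restrict) (use ind in \<open>auto simp: X_def K_def disjoint_family_on_def\<close>)
  hence "indep_vars (\<lambda>_. borel) (\<lambda>j \<omega>. (\<lambda>r. f (r (False, j), r (True, j))) (restrict (\<lambda>i. X i \<omega>) (K j))) UNIV"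
  proof (rule indep_vars_compose2)
    fix j :: nat
    have [measurable]: "(\<lambda>r. r (False, j)) \<in> borel_measurable (PiM (K j) (\<lambda>_. borel :: real measure))"
      by (rule measurable_component_singleton) (simp add: K_def)
    have [measurable]: "(\<lambda>r. r (True, j)) \<in> borel_measurable (PiM (K j) (\<lambda>_. borel :: real measure))"
      by (rule measurable_component_singleton) (simp add: K_def)
    show "(\<lambda>r. f (r (False, j), r (True, j))) \<in> borel_measurable (PiM (K j) (\<lambda>_. borel))"
      by measurable
  qed
  thus ?thesis by (simp add: X_def K_def)
qed

lemma (in prob_space) indep_pair1:
  fixes Z1 Z2 :: "nat \<Rightarrow> 'a \<Rightarrow> real"
  assumes ind: "indep_vars (\<lambda>_. borel) (\<lambda>(b, i). if b then Z2 i else Z1 i) (UNIV :: (bool \<times> nat) set)"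
  shows "indep_var borel (Z1 i) borel (Z2 i)"
proof -
  define X where "X = (\<lambda>(b, i). if b then Z2 i else Z1 i)"
  have "indep_var (PiM {(False,i)} (\<lambda>_. borel)) (\<lambda>\<omega>. restrict (\<lambda>j. X j \<omega>) {(False,i)})
                  (PiM {(True,i)} (\<lambda>_. borel)) (\<lambda>\<omega>. restrict (\<lambda>j. X j \<omega>) {(True,i)})"
    by (rule indep_var_restrict) (use ind in \<open>auto simp: X_def\<close>)
  hence "indep_var borel ((\<lambda>r. r (False,i)) \<circ> (\<lambda>\<omega>. restrict (\<lambda>j. X j \<omega>) {(False,i)}))
                  borel ((\<lambda>r. r (True,i)) \<circ> (\<lambda>\<omega>. restrict (\<lambda>j. X j \<omega>) {(True,i)}))"
    by (rule indep_var_compose) (auto intro!: measurable_component_singleton)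
  moreover have "((\<lambda>r. r (False,i)) \<circ> (\<lambda>\<omega>. restrict (\<lambda>j. X j \<omega>) {(False,i)})) = Z1 i"
    "((\<lambda>r. r (True,i)) \<circ> (\<lambda>\<omega>. restrict (\<lambda>j. X j \<omega>) {(True,i)})) = Z2 i"
    by (auto simp: X_def fun_eq_iff)
  ultimately show ?thesis by simp
qed



lemma std_normal_density_le: "std_normal_density x \<le> 1 / sqrt (2 * pi)"
  unfolding std_normal_density_def by (simp add: divide_le_eq)

lemma (in prob_space) normal_interval_emeasure:
  assumes D: "distributed M lborel Z std_normal_density" and lh: "lo \<le> hi"
  shows "emeasure M (Z -` {lo..hi} \<inter> space M) \<le> ennreal ((hi - lo) / sqrt (2 * pi))"
proof -
  have "emeasure M (Z -` {lo..hi} \<inter> space M) = (\<integral>\<^sup>+x. ennreal (std_normal_density x) * indicator {lo..hi} x \<partial>lborel)"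
    by (rule distributed_emeasure[OF D]) simp
  also have "\<dots> \<le> (\<integral>\<^sup>+x. ennreal (1 / sqrt (2 * pi)) * indicator {lo..hi} x \<partial>lborel)"
    by (intro nn_integral_mono mult_right_mono) (auto intro: std_normal_density_le)
  also have "\<dots> = ennreal (1 / sqrt (2 * pi)) * emeasure lborel {lo..hi}"
    by (subst nn_integral_cmult_indicator) auto
  also have "\<dots> = ennreal ((hi - lo) / sqrt (2 * pi))"
    using lh by (simp add: ennreal_mult[symmetric])
  finally show ?thesis .
qed

lemma (in prob_space) normal_interval_prob:
  assumes D: "distributed M lborel Z std_normal_density" and h: "0 \<le> h"
  shows "prob {\<omega>\<in>space M. \<bar>Z \<omega> - c\<bar> \<le> h} \<le> 2 * h / sqrt (2 * pi)"
proof -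
  have "{\<omega>\<in>space M. \<bar>Z \<omega> - c\<bar> \<le> h} = Z -` {c - h..c + h} \<inter> space M" by auto
  hence "emeasure M {\<omega>\<in>space M. \<bar>Z \<omega> - c\<bar> \<le> h} \<le> ennreal ((c + h - (c - h)) / sqrt (2 * pi))"
    using normal_interval_emeasure[OF D, of "c - h" "c + h"] h by simp
  moreover have "0 \<le> 2 * h / sqrt (2 * pi)" using h by simp
  ultimately show ?thesis by (simp add: emeasure_eq_measure ennreal_le_iff)
qed

lemma (in prob_space) slab_prob:
  assumes D1: "distributed M lborel Z1 std_normal_density"
    and D2: "distributed M lborel Z2 std_normal_density"
    and ind: "indep_var borel Z1 borel Z2" and w: "0 \<le> w"
  shows "prob {\<omega>\<in>space M. \<bar>Z2 \<omega> - a - b * Z1 \<omega>\<bar> \<le> w} \<le> 2 * w / sqrt (2 * pi)"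
proof -
  have rv1[measurable]: "Z1 \<in> borel_measurable M" and rv2[measurable]: "Z2 \<in> borel_measurable M"
    using ind by (auto dest: indep_var_rv1 indep_var_rv2)
  have eq: "distr M borel Z1 \<Otimes>\<^sub>M distr M borel Z2 = distr M (borel \<Otimes>\<^sub>M borel) (\<lambda>x. (Z1 x, Z2 x))"
    using ind indep_var_distribution_eq by blast
  define S where "S = {p :: real \<times> real. \<bar>snd p - a - b * fst p\<bar> \<le> w}"
  have fm: "(\<lambda>p::real\<times>real. \<bar>snd p - a - b * fst p\<bar>) \<in> borel_measurable (borel \<Otimes>\<^sub>M borel)"
    by measurable
  have "S = (\<lambda>p::real\<times>real. \<bar>snd p - a - b * fst p\<bar>) -` {..w} \<inter> space (borel \<Otimes>\<^sub>M borel)"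
    by (auto simp: S_def space_pair_measure)
  hence S[measurable]: "S \<in> sets (borel \<Otimes>\<^sub>M borel)" using measurable_sets[OF fm, of "{..w}"] by simp
  interpret P2: prob_space "distr M borel Z2" by (rule prob_space_distr) simp
  interpret P1: prob_space "distr M borel Z1" by (rule prob_space_distr) simp
  have "{\<omega>\<in>space M. \<bar>Z2 \<omega> - a - b * Z1 \<omega>\<bar> \<le> w} = (\<lambda>x. (Z1 x, Z2 x)) -` S \<inter> space M"
    by (auto simp: S_def)
  hence "emeasure M {\<omega>\<in>space M. \<bar>Z2 \<omega> - a - b * Z1 \<omega>\<bar> \<le> w}
      = emeasure (distr M (borel \<Otimes>\<^sub>M borel) (\<lambda>x. (Z1 x, Z2 x))) S"
    by (simp add: emeasure_distr)
  also have "\<dots> = emeasure (distr M borel Z1 \<Otimes>\<^sub>M distr M borel Z2) S" by (simp add: eq)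
  also have "\<dots> = (\<integral>\<^sup>+x. emeasure (distr M borel Z2) (Pair x -` S) \<partial>distr M borel Z1)"
    by (rule P2.emeasure_pair_measure_alt) simp
  also have "\<dots> \<le> (\<integral>\<^sup>+x. ennreal (2 * w / sqrt (2 * pi)) \<partial>distr M borel Z1)"
  proof (rule nn_integral_mono)
    fix x
    have "Pair x -` S = {a + b * x - w .. a + b * x + w}" by (auto simp: S_def)
    hence "emeasure (distr M borel Z2) (Pair x -` S) = emeasure M (Z2 -` {a + b * x - w .. a + b * x + w} \<inter> space M)"
      by (simp add: emeasure_distr)
    also have "\<dots> \<le> ennreal ((a + b * x + w - (a + b * x - w)) / sqrt (2 * pi))"
      by (rule normal_interval_emeasure[OF D2]) (use w in simp)
    finally show "emeasure (distr M borel Z2) (Pair x -` S) \<le> ennreal (2 * w / sqrt (2 * pi))" by simp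
  qed
  also have "\<dots> = ennreal (2 * w / sqrt (2 * pi))"
    using P1.emeasure_space_1 by simp
  moreover have "0 \<le> 2 * w / sqrt (2 * pi)" using w by simp
  ultimately show ?thesis by (simp add: emeasure_eq_measure ennreal_le_iff)
qed

lemma (in prob_space) normal_tail:
  assumes D: "distributed M lborel Z std_normal_density" and R: "R > 0"
  shows "prob {\<omega>\<in>space M. \<bar>Z \<omega>\<bar> \<ge> R} \<le> 1 / R\<^sup>2"
proof -
  have [measurable]: "Z \<in> borel_measurable M"
    using distributed_measurable[OF D] by simp
  have "integrable lborel (\<lambda>x. std_normal_density x * x ^ 2)" by (rule integrable_std_normal_moment)
  hence int: "integrable M (\<lambda>x. Z x ^ 2)"
    using distributed_integrable[OF D, of "\<lambda>x. x ^ 2"] by simp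
  have "prob {x\<in>space M. \<bar>Z x - expectation Z\<bar> \<ge> R} \<le> variance Z / R\<^sup>2"
    by (rule Chebyshev_inequality) (use int R in auto)
  thus ?thesis
    using standard_normal_distributed_expectation[OF D] standard_normal_distributed_variance[OF D]
    by simp
qed



definition Pk :: "bool \<times> int \<times> int \<Rightarrow> real \<Rightarrow> real \<Rightarrow> bool" where
  "Pk k x y = (20 \<le> \<bar>x\<bar> \<or> 20 \<le> \<bar>y\<bar> \<or>
     (case k of (True, j, m) \<Rightarrow> \<bar>y - real_of_int j / 100 - real_of_int m / 1000 * x\<bar> \<le> 53 / 200
              | (False, j, m) \<Rightarrow> \<bar>x - real_of_int j / 100\<bar> \<le> 83 / 400))"

definition Kset :: "(bool \<times> int \<times> int) set" where
  "Kset = {True} \<times> {-210000..210000} \<times> {-100000..100000} \<union> {False} \<times> {-3000..3000} \<times> {0}"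

lemma finite_Kset: "finite Kset" unfolding Kset_def by auto

lemma round_close: "\<bar>real_of_int (round (c * t)) / c - t\<bar> \<le> 1 / (2 * c)" if "c > 0" for c t :: real
proof -
  have "\<bar>real_of_int (round (c * t)) - c * t\<bar> \<le> 1/2" by (rule of_int_round_abs_le)
  hence "\<bar>real_of_int (round (c * t)) - c * t\<bar> / c \<le> (1/2) / c"
    using that by (intro divide_right_mono) auto
  hence "\<bar>(real_of_int (round (c * t)) - c * t) / c\<bar> \<le> 1 / (2 * c)"
    using that by (simp add: abs_div)
  moreover have "(real_of_int (round (c * t)) - c * t) / c = real_of_int (round (c * t)) / c - t"
    using that by (simp add: field_simps)
  ultimately show ?thesis by simp
qed

lemma cover:
  fixes b0 b1 :: real
  shows "\<exists>k\<in>Kset. \<forall>x y. \<bar>y - b0 - b1 * x\<bar> \<le> 1/4 \<longrightarrow> Pk k x y"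
proof (cases "\<bar>b1\<bar> \<le> 100")
  case nst: True
  show ?thesis
  proof (cases "\<bar>b0\<bar> \<le> 2100")
    case True
    define j where "j = round (100 * b0)"
    define m where "m = round (1000 * b1)"
    have hj: "\<bar>real_of_int j / 100 - b0\<bar> \<le> 1/200" using round_close[of 100 b0] by (simp add: j_def)
    have hm: "\<bar>real_of_int m / 1000 - b1\<bar> \<le> 1/2000" using round_close[of 1000 b1] by (simp add: m_def)
    have "\<bar>real_of_int m - 1000 * b1\<bar> \<le> 1/2" unfolding m_def by (rule of_int_round_abs_le)
    hence "real_of_int \<bar>m\<bar> < 100001" using nst by linarith
    hence "\<bar>m\<bar> \<le> 100000" by linarith
    moreover have "\<bar>real_of_int j - 100 * b0\<bar> \<le> 1/2" unfolding j_def by (rule of_int_round_abs_le)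
    hence "real_of_int \<bar>j\<bar> < 210001" using True by linarith
    hence "\<bar>j\<bar> \<le> 210000" by linarith
    ultimately have kin: "(True, j, m) \<in> Kset" unfolding Kset_def by auto
    have "Pk (True, j, m) x y" if "\<bar>y - b0 - b1 * x\<bar> \<le> 1/4" for x y
    proof (cases "20 \<le> \<bar>x\<bar>")
      case False
      have "\<bar>(real_of_int m / 1000 - b1) * x\<bar> \<le> 1/2000 * 20"
        unfolding abs_mult using False hm by (intro mult_mono) auto
      hence "\<bar>y - real_of_int j / 100 - real_of_int m / 1000 * x\<bar> \<le> 53/200"
        using that hj by (simp add: algebra_simps abs_if split: if_splits) linarith?
      thus ?thesis by (simp add: Pk_def)
    qed (simp add: Pk_def)
    with kin show ?thesis by blast
  next
    case False
    have "Pk (True, 0, 0) x y" if "\<bar>y - b0 - b1 * x\<bar> \<le> 1/4" for x y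
    proof (rule ccontr)
      assume "\<not> Pk (True, 0, 0) x y"
      hence x: "\<bar>x\<bar> < 20" and y: "\<bar>y\<bar> < 20" by (auto simp: Pk_def)
      have "\<bar>b1 * x\<bar> \<le> 100 * 20" unfolding abs_mult using nst x by (intro mult_mono) auto
      thus False using that False y by linarith
    qed
    moreover have "(True, 0, 0) \<in> Kset" by (simp add: Kset_def)
    ultimately show ?thesis by blast
  qed
next
  case st: False
  define c where "c = - b0 / b1"
  have b1: "\<bar>b1\<bar> > 100" using st by simp
  have key: "\<bar>x - c\<bar> \<le> 81/400" if "\<bar>y - b0 - b1 * x\<bar> \<le> 1/4" "\<bar>y\<bar> < 20" for x y
  proof -
    have "\<bar>b1 * x + b0\<bar> \<le> 81/4" using that by linarith
    moreover have "b1 * x + b0 = b1 * (x - c)" using b1 by (auto simp: c_def field_simps)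
    ultimately have "\<bar>b1\<bar> * \<bar>x - c\<bar> \<le> 81/4" by (simp add: abs_mult)
    moreover have "100 * \<bar>x - c\<bar> \<le> \<bar>b1\<bar> * \<bar>x - c\<bar>" using b1 by (intro mult_right_mono) auto
    ultimately have "100 * \<bar>x - c\<bar> \<le> 81/4" by (rule_tac order_trans) auto
    thus ?thesis by simp
  qed
  show ?thesis
  proof (cases "\<bar>c\<bar> \<le> 30")
    case True
    define j where "j = round (100 * c)"
    have hj: "\<bar>real_of_int j / 100 - c\<bar> \<le> 1/200" using round_close[of 100 c] by (simp add: j_def)
    have "\<bar>real_of_int j - 100 * c\<bar> \<le> 1/2" unfolding j_def by (rule of_int_round_abs_le)
    hence "real_of_int \<bar>j\<bar> < 3001" using True by linarith
    hence "\<bar>j\<bar> \<le> 3000" by linarith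
    hence kin: "(False, j, 0) \<in> Kset" unfolding Kset_def by auto
    have "Pk (False, j, 0) x y" if "\<bar>y - b0 - b1 * x\<bar> \<le> 1/4" for x y
    proof (cases "20 \<le> \<bar>y\<bar>")
      case False
      with key[OF that] hj have "\<bar>x - real_of_int j / 100\<bar> \<le> 83 / 400" by arith
      thus ?thesis by (simp add: Pk_def)
    qed (simp add: Pk_def)
    with kin show ?thesis by blast
  next
    case False
    have "Pk (True, 0, 0) x y" if "\<bar>y - b0 - b1 * x\<bar> \<le> 1/4" for x y
    proof (rule ccontr)
      assume "\<not> Pk (True, 0, 0) x y"
      hence x: "\<bar>x\<bar> < 20" and y: "\<bar>y\<bar> < 20" by (auto simp: Pk_def)
      with key[OF that y] False show False by linarith
    qed
    moreover have "(True, 0, 0) \<in> Kset" by (simp add: Kset_def)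
    ultimately show ?thesis by blast
  qed
qed



lemma sum_if_card: "(\<Sum>i<(n::nat). if P i then 1 else 0 :: real) = real (card {i. i < n \<and> P i})"
proof -
  have "sum (\<lambda>_. 1::real) {i\<in>{..<n}. P i} = (\<Sum>i<n. if P i then 1 else 0)"
    by (rule sum.inter_filter) auto
  moreover have "{i\<in>{..<n}. P i} = {i. i < n \<and> P i}" by auto
  ultimately show ?thesis by simp
qed

lemma Pk_pred: "Measurable.pred (borel \<Otimes>\<^sub>M borel) (\<lambda>p::real\<times>real. Pk k (fst p) (snd p))"
proof -
  obtain b j m where k: "k = (b, j, m)" by (cases k) auto
  show ?thesis
  proof (cases b)
    case True
    show ?thesis unfolding k Pk_def using True by simp measurable
  next
    case False
    show ?thesis unfolding k Pk_def using False by simp measurable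
  qed
qed

lemma Pk_meas: "(\<lambda>p::real\<times>real. if Pk k (fst p) (snd p) then 1 else 0 :: real) \<in> borel_measurable borel"
proof -
  have "(\<lambda>p::real\<times>real. if Pk k (fst p) (snd p) then 1 else 0 :: real) \<in> borel_measurable (borel \<Otimes>\<^sub>M borel)"
    using Pk_pred[of k] by measurable
  thus ?thesis by (simp add: borel_prod)
qed

lemma sqrt2pi: "sqrt (2 * pi) \<ge> 12 / 5"
proof -
  have "(12/5)\<^sup>2 \<le> 2 * pi" using pi_gt3 by (simp add: power2_eq_square)
  thus ?thesis by (rule real_le_rsqrt)
qed

lemma (in prob_space) Pk_prob:
  assumes D1: "distributed M lborel Z1 std_normal_density"
    and D2: "distributed M lborel Z2 std_normal_density"
    and ind: "indep_var borel Z1 borel Z2"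
  shows "prob {\<omega>\<in>space M. Pk k (Z1 \<omega>) (Z2 \<omega>)} \<le> 24 / 100"
proof -
  have rv1[measurable]: "Z1 \<in> borel_measurable M" and rv2[measurable]: "Z2 \<in> borel_measurable M"
    using ind by (auto dest: indep_var_rv1 indep_var_rv2)
  obtain b j m where k: "k = (b, j, m)" by (cases k) auto
  define E1 where "E1 = {\<omega>\<in>space M. \<bar>Z1 \<omega>\<bar> \<ge> 20}"
  define E2 where "E2 = {\<omega>\<in>space M. \<bar>Z2 \<omega>\<bar> \<ge> 20}"
  define E3 where "E3 = (if b then {\<omega>\<in>space M. \<bar>Z2 \<omega> - real_of_int j / 100 - real_of_int m / 1000 * Z1 \<omega>\<bar> \<le> 53/200}
                        else {\<omega>\<in>space M. \<bar>Z1 \<omega> - real_of_int j / 100\<bar> \<le> 83/400})"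
  have [measurable]: "E1 \<in> sets M" unfolding E1_def by measurable
  have [measurable]: "E2 \<in> sets M" unfolding E2_def by measurable
  have [measurable]: "E3 \<in> sets M"
  proof (cases b)
    case True
    show ?thesis unfolding E3_def using True by simp measurable
  next
    case False
    show ?thesis unfolding E3_def using False by simp measurable
  qed
  have p1: "prob E1 \<le> 1/400" unfolding E1_def using normal_tail[OF D1, of 20] by (simp add: power2_eq_square)
  have p2: "prob E2 \<le> 1/400" unfolding E2_def using normal_tail[OF D2, of 20] by (simp add: power2_eq_square)
  have p3: "prob E3 \<le> 2 * (53/200) / sqrt (2 * pi)"
  proof (cases b)
    case True
    then show ?thesis unfolding E3_def
      using slab_prob[OF D1 D2 ind, of "53/200" "real_of_int j / 100" "real_of_int m / 1000"] by simp
  next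
    case False
    have "prob E3 \<le> 2 * (83/400) / sqrt (2 * pi)" unfolding E3_def
      using False normal_interval_prob[OF D1, of "83/400" "real_of_int j / 100"] by simp
    also have "\<dots> \<le> 2 * (53/200) / sqrt (2 * pi)" by (intro divide_right_mono) auto
    finally show ?thesis .
  qed
  have "{\<omega>\<in>space M. Pk k (Z1 \<omega>) (Z2 \<omega>)} \<subseteq> (E1 \<union> E2) \<union> E3"
    unfolding k Pk_def E1_def E2_def E3_def by (cases b) auto
  hence "prob {\<omega>\<in>space M. Pk k (Z1 \<omega>) (Z2 \<omega>)} \<le> prob ((E1 \<union> E2) \<union> E3)"
    by (intro finite_measure_mono) auto
  also have "\<dots> \<le> prob (E1 \<union> E2) + prob E3" by (rule measure_Un_le) auto
  also have "\<dots> \<le> prob E1 + prob E2 + prob E3"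
    using measure_Un_le[of E1 M E2] by simp
  also have "\<dots> \<le> 1/400 + 1/400 + 2 * (53/200) / sqrt (2 * pi)" using p1 p2 p3 by simp
  also have "\<dots> \<le> 1/400 + 1/400 + 2 * (53/200) / (12/5)"
    using sqrt2pi by (intro add_left_mono divide_left_mono) auto
  also have "\<dots> \<le> 24 / 100" by simp
  finally show ?thesis .
qed



theorem lemma1:
  fixes M :: "'a measure" and Z1 Z2 :: "nat \<Rightarrow> 'a \<Rightarrow> real"
  assumes "prob_space M"
    and "prob_space.indep_vars M (\<lambda>_. borel)
           (\<lambda>(b, i). if b then Z2 i else Z1 i) (UNIV :: (bool \<times> nat) set)"
    and "\<And>i. distributed M lborel (Z1 i) std_normal_density"
    and "\<And>i. distributed M lborel (Z2 i) std_normal_density"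
  shows "AE \<omega> in M. eventually (\<lambda>n. (\<forall>\<beta>0 \<beta>1 :: real.
           real (card {i. i < n \<and> \<bar>Z2 i \<omega> - \<beta>0 - \<beta>1 * Z1 i \<omega>\<bar> \<le> 1/4})
             \<le> real n / 4)) sequentially"
proof -
  interpret prob_space M by (rule assms(1))
  have ind: "indep_var borel (Z1 i) borel (Z2 i)" for i
    by (rule indep_pair1[OF assms(2)])
  define f where "f k = (\<lambda>p::real\<times>real. if Pk k (fst p) (snd p) then 1 else 0 :: real)" for k
  have ev: "AE \<omega> in M. eventually (\<lambda>n. (\<Sum>i<n. f k (Z1 i \<omega>, Z2 i \<omega>)) \<le> real n * (1/4)) sequentially" for k
  proof (rule eventually_sum_le)
    show "indep_vars (\<lambda>_. borel) (\<lambda>i \<omega>. f k (Z1 i \<omega>, Z2 i \<omega>)) UNIV"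
      by (rule indep_pairs[OF assms(2)]) (simp add: f_def Pk_meas)
    show "f k (Z1 i x, Z2 i x) \<in> {0..1}" for i x by (simp add: f_def)
    show "expectation (\<lambda>\<omega>. f k (Z1 i \<omega>, Z2 i \<omega>)) \<le> 24/100" for i
    proof -
      have rv1[measurable]: "Z1 i \<in> borel_measurable M" and rv2[measurable]: "Z2 i \<in> borel_measurable M"
        using ind[of i] by (auto dest: indep_var_rv1 indep_var_rv2)
      have pm: "(\<lambda>\<omega>. (Z1 i \<omega>, Z2 i \<omega>)) \<in> measurable M (borel \<Otimes>\<^sub>M borel)" by measurable
      have "Measurable.pred M (\<lambda>\<omega>. (\<lambda>p::real\<times>real. Pk k (fst p) (snd p)) (Z1 i \<omega>, Z2 i \<omega>))"
        by (rule measurable_compose[OF pm Pk_pred])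
      hence "Measurable.pred M (\<lambda>\<omega>. Pk k (Z1 i \<omega>) (Z2 i \<omega>))" by simp
      hence Em[measurable]: "{\<omega>\<in>space M. Pk k (Z1 i \<omega>) (Z2 i \<omega>)} \<in> sets M" by measurable
      have "expectation (\<lambda>\<omega>. f k (Z1 i \<omega>, Z2 i \<omega>)) = expectation (indicator {\<omega>\<in>space M. Pk k (Z1 i \<omega>) (Z2 i \<omega>)})"
        by (rule Bochner_Integration.integral_cong) (auto simp: f_def indicator_def)
      also have "\<dots> = prob {\<omega>\<in>space M. Pk k (Z1 i \<omega>) (Z2 i \<omega>)}"
        by (simp add: Int_absorb2)
      also have "\<dots> \<le> 24/100" by (rule Pk_prob[OF assms(3) assms(4) ind])
      finally show ?thesis .
    qed
  qed simp
  have "AE \<omega> in M. \<forall>k\<in>Kset. eventually (\<lambda>n. (\<Sum>i<n. f k (Z1 i \<omega>, Z2 i \<omega>)) \<le> real n * (1/4)) sequentially"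
    by (rule AE_finite_allI[OF finite_Kset]) (rule ev)
  thus ?thesis
  proof (rule AE_mp, intro AE_I2 impI)
    fix \<omega>
    assume "\<forall>k\<in>Kset. eventually (\<lambda>n. (\<Sum>i<n. f k (Z1 i \<omega>, Z2 i \<omega>)) \<le> real n * (1/4)) sequentially"
    hence "eventually (\<lambda>n. \<forall>k\<in>Kset. (\<Sum>i<n. f k (Z1 i \<omega>, Z2 i \<omega>)) \<le> real n * (1/4)) sequentially"
      by (rule eventually_ball_finite[OF finite_Kset])
    thus "eventually (\<lambda>n. (\<forall>\<beta>0 \<beta>1 :: real.
           real (card {i. i < n \<and> \<bar>Z2 i \<omega> - \<beta>0 - \<beta>1 * Z1 i \<omega>\<bar> \<le> 1/4}) \<le> real n / 4)) sequentially"
    proof (rule eventually_mono, intro allI)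
      fix n :: nat and b0 b1 :: real
      assume H: "\<forall>k\<in>Kset. (\<Sum>i<n. f k (Z1 i \<omega>, Z2 i \<omega>)) \<le> real n * (1/4)"
      obtain k where kK: "k \<in> Kset" and kc: "\<And>x y. \<bar>y - b0 - b1 * x\<bar> \<le> 1/4 \<Longrightarrow> Pk k x y"
        using cover[of b0 b1] by blast
      have "card {i. i < n \<and> \<bar>Z2 i \<omega> - b0 - b1 * Z1 i \<omega>\<bar> \<le> 1/4} \<le> card {i. i < n \<and> Pk k (Z1 i \<omega>) (Z2 i \<omega>)}"
        by (rule card_mono) (auto intro: kc)
      hence "real (card {i. i < n \<and> \<bar>Z2 i \<omega> - b0 - b1 * Z1 i \<omega>\<bar> \<le> 1/4}) \<le> real (card {i. i < n \<and> Pk k (Z1 i \<omega>) (Z2 i \<omega>)})"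
        by simp
      also have "\<dots> = (\<Sum>i<n. f k (Z1 i \<omega>, Z2 i \<omega>))"
        by (simp add: f_def sum_if_card)
      also have "\<dots> \<le> real n * (1/4)" using H kK by blast
      finally show "real (card {i. i < n \<and> \<bar>Z2 i \<omega> - b0 - b1 * Z1 i \<omega>\<bar> \<le> 1/4}) \<le> real n / 4" by simp
    qed
  qed
qed


end
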